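(* Let $k\ge1$ and $\ell\ge0$. Then $$\min\{n\in A_{2k}:\max\mathcal{CG}(n)=\max\mathcal{CG}_2(n)=F_{2k+2\ell}\}>\max\{n\in A_{2k}:\max\mathcal{CG}(n)=\max\mathcal{CG}_1(n)=F_{2k+2\ell}\}.$$
   Context: Fibonacci numbers: $F_1=F_2=1$, $F_{n+1}=F_n+F_{n-1}$ for $n\ge2$. Chung–Graham decomposition: every positive integer $n$ has a unique representation $n=\sum_{i\ge1}c_iF_{2i}$ with $c_i\in\{0,1,2\}$, only finitely many nonzero, such that whenever $c_i=c_j=2$ with $i<j$ there is $k$ with $i<k<j$ and $c_k=0$. Let $\mathcal{CG}(n)$ be the set of $F_{2i}$ with $c_i\neq0$, $\mathcal{CG}_1(n)$ the set of $F_{2i}$ with $c_i=1$, and $\mathcal{CG}_2(n)$ the set of $F_{2i}$ with $c_i=2$. For $k\ge1$, $A_{2k}=\{n\ge1:\min\mathcal{CG}(n)=F_{2k}\}$. *)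

theory Defs
  imports "HOL-Number_Theory.Fib"
begin

text \<open>Chung--Graham decomposition. Coefficients are a function c :: nat => nat,
  where c i is the coefficient of F_(2i) for i >= 1 (c 0 = 0 by convention).\<close>

definition is_CG :: "nat \<Rightarrow> (nat \<Rightarrow> nat) \<Rightarrow> bool" where
  "is_CG n c \<longleftrightarrow>
     c 0 = 0 \<and> (\<forall>i. c i \<le> 2) \<and> finite {i. c i \<noteq> 0} \<and>
     n = (\<Sum>i\<in>{i. c i \<noteq> 0}. c i * fib (2 * i)) \<and>
     (\<forall>i j. i < j \<and> c i = 2 \<and> c j = 2 \<longrightarrow> (\<exists>k. i < k \<and> k < j \<and> c k = 0))"

definition CG_coeff :: "nat \<Rightarrow> nat \<Rightarrow> nat" where
  "CG_coeff n = (THE c. is_CG n c)"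

definition CG :: "nat \<Rightarrow> nat set" where
  "CG n = {fib (2 * i) | i. i \<ge> 1 \<and> CG_coeff n i \<noteq> 0}"

definition CG1 :: "nat \<Rightarrow> nat set" where
  "CG1 n = {fib (2 * i) | i. i \<ge> 1 \<and> CG_coeff n i = 1}"

definition CG2 :: "nat \<Rightarrow> nat set" where
  "CG2 n = {fib (2 * i) | i. i \<ge> 1 \<and> CG_coeff n i = 2}"

definition A :: "nat \<Rightarrow> nat set" where
  "A k = {n. n \<ge> 1 \<and> Min (CG n) = fib (2 * k)}"

end

theory Submission
  imports Defs
begin

definition valid :: "(nat \<Rightarrow> nat) \<Rightarrow> bool" where
  "valid c \<longleftrightarrow> c 0 = 0 \<and> (\<forall>i. c i \<le> 2) \<and>
     (\<forall>i j. i < j \<and> c i = 2 \<and> c j = 2 \<longrightarrow> (\<exists>k. i < k \<and> k < j \<and> c k = 0))"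

definition free :: "nat \<Rightarrow> (nat \<Rightarrow> nat) \<Rightarrow> bool" where
  "free m c \<longleftrightarrow> (\<forall>i\<le>m. c i = 2 \<longrightarrow> (\<exists>k. i < k \<and> k \<le> m \<and> c k = 0))"

definition val :: "(nat \<Rightarrow> nat) \<Rightarrow> nat \<Rightarrow> nat" where
  "val c m = (\<Sum>i\<le>m. c i * fib (2*i))"

lemma fibA: "fib (2*m+4) = fib (2*m+3) + fib (2*m+2)"
proof -
  have a: "2*m+4 = (2*m+2)+2" "2*m+3 = (2*m+2)+1" by simp_all
  show ?thesis by (subst a(1), subst a(2), rule fib_plus_2)
qed

lemma fibB: "fib (2*m+3) = fib (2*m+2) + fib (2*m+1)"
proof -
  have a: "2*m+3 = (2*m+1)+2" "2*m+2 = (2*m+1)+1" by simp_all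
  show ?thesis by (subst a(1), subst a(2), rule fib_plus_2)
qed

lemma fib2_less: "i < j \<Longrightarrow> fib (2*i) < fib (2*j)"
proof -
  assume "i < j"
  have "fib (2*i+2) \<le> fib (2*j)" using \<open>i<j\<close> by (intro fib_mono) simp
  moreover have "fib (2*i+2) = fib (2*i+1) + fib (2*i)"
    using fib_plus_2[of "2*i"] by simp
  moreover have "fib (2*i+1) > 0" by (intro fib_neq_0_nat) simp
  ultimately show ?thesis by linarith
qed

lemma fib2_inj: "fib (2*i) = fib (2*j) \<Longrightarrow> i = j"
  by (metis fib2_less less_irrefl linorder_neqE_nat)

lemma val_Suc: "val c (Suc m) = val c m + c (Suc m) * fib (2*m+2)"
  by (simp add: val_def)

lemma val_upd: "val (c(Suc m := x)) m = val c m"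
  unfolding val_def by (rule sum.cong) auto

lemma valid_drop: "valid c \<Longrightarrow> valid (c(Suc m := 0))"
  unfolding valid_def
  apply (intro conjI allI impI)
    apply simp
   apply simp
  apply (clarsimp split: if_splits)
  by (metis fun_upd_other fun_upd_same)

lemma bound:
  "valid c \<Longrightarrow> (\<forall>i>m. c i = 0) \<Longrightarrow> val c m < fib (2*m+2) \<and> (free m c \<longrightarrow> val c m < fib (2*m+1))"
proof (induction m arbitrary: c)
  case 0
  then show ?case by (simp add: val_def valid_def)
next
  case (Suc m)
  define c' where "c' = c(Suc m := 0)"
  have v': "valid c'" unfolding c'_def using Suc.prems(1) by (rule valid_drop)
  have s': "\<forall>i>m. c' i = 0" using Suc.prems(2) by (simp add: c'_def)
  have val': "val c' m = val c m" unfolding c'_def by (rule val_upd)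
  from Suc.IH[OF v' s'] have IH: "val c m < fib (2*m+2)" "free m c' \<Longrightarrow> val c m < fib (2*m+1)"
    using val' by auto
  have F: "fib (2*m+4) = fib (2*m+3) + fib (2*m+2)" "fib (2*m+3) = fib (2*m+2) + fib (2*m+1)"
    using fibA fibB by auto
  have eqs: "2 * Suc m + 2 = 2*m+4" "2 * Suc m + 1 = 2*m+3" by auto
  have le2: "c (Suc m) \<le> 2" using Suc.prems(1) by (simp add: valid_def)
  consider "c (Suc m) = 0" | "c (Suc m) = 1" | "c (Suc m) = 2" using le2 by linarith
  then show ?case
  proof cases
    case 1
    then have "val c (Suc m) = val c m" by (simp add: val_Suc)
    then show ?thesis using IH(1) F unfolding eqs by linarith
  next
    case 2
    have "free (Suc m) c \<Longrightarrow> free m c'"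
      unfolding free_def c'_def
    proof (intro allI impI)
      fix i assume fr: "\<forall>i\<le>Suc m. c i = 2 \<longrightarrow> (\<exists>k>i. k \<le> Suc m \<and> c k = 0)"
        and i: "i \<le> m" and ci: "(c(Suc m := 0)) i = 2"
      have "i \<le> Suc m" "c i = 2" using i ci by auto
      then obtain k where "k > i" "k \<le> Suc m" "c k = 0" using fr by blast
      have "k \<noteq> Suc m" using 2 \<open>c k = 0\<close> by auto
      then have "k \<le> m" using \<open>k \<le> Suc m\<close> by simp
      then show "\<exists>k>i. k \<le> m \<and> (c(Suc m := 0)) k = 0" using \<open>k>i\<close> \<open>c k = 0\<close> \<open>k \<noteq> Suc m\<close> by (intro exI[of _ k]) auto
    qed
    moreover have "val c (Suc m) = val c m + fib (2*m+2)" using 2 by (simp add: val_Suc)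
    ultimately show ?thesis using IH F unfolding eqs by auto
  next
    case 3
    have "free m c'"
      unfolding free_def c'_def
    proof (intro allI impI)
      fix i assume i: "i \<le> m" and ci: "(c(Suc m := 0)) i = 2"
      then have "c i = 2" by auto
      have "i < Suc m" using i by simp
      then obtain k where "i < k" "k < Suc m" "c k = 0"
        using Suc.prems(1) 3 \<open>c i = 2\<close> unfolding valid_def by blast
      then show "\<exists>k>i. k \<le> m \<and> (c(Suc m := 0)) k = 0" by (intro exI[of _ k]) auto
    qed
    then have "val c m < fib (2*m+1)" using IH by auto
    moreover have "\<not> free (Suc m) c" using 3 unfolding free_def by auto
    moreover have "val c (Suc m) = val c m + 2 * fib (2*m+2)" using 3 by (simp add: val_Suc)
    ultimately show ?thesis using F unfolding eqs by auto
  qed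
qed

lemma drop_bound: "valid c \<Longrightarrow> (\<forall>i>Suc m. c i = 0) \<Longrightarrow> val c m < fib (2*m+2)"
  using bound[OF valid_drop[of c m], of m] val_upd[of c m 0] by auto

lemma uniq:
  "valid c \<Longrightarrow> valid d \<Longrightarrow> (\<forall>i>m. c i = 0) \<Longrightarrow> (\<forall>i>m. d i = 0) \<Longrightarrow> val c m = val d m \<Longrightarrow> c = d"
proof (induction m arbitrary: c d)
  case 0
  then show ?case unfolding valid_def by (metis ext gr0I)
next
  case (Suc m)
  have key: False if "valid c" "valid d" "\<forall>i>Suc m. c i = 0" "\<forall>i>Suc m. d i = 0"
     "val c (Suc m) = val d (Suc m)" "c (Suc m) < d (Suc m)" for c d
  proof -
    have "val c m < fib (2*m+2)" using drop_bound that by auto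
    then have "val c (Suc m) < (c (Suc m) + 1) * fib (2*m+2)" by (simp add: val_Suc)
    also have "\<dots> \<le> d (Suc m) * fib (2*m+2)" using that(6) by (intro mult_right_mono) auto
    also have "\<dots> \<le> val d (Suc m)" by (simp add: val_Suc)
    finally show False using that(5) by simp
  qed
  show ?case
  proof (cases "c (Suc m) = d (Suc m)")
    case True
    have "val c m = val d m" using Suc.prems(5) True by (simp add: val_Suc)
    have "c(Suc m := 0) = d(Suc m := 0)"
    proof (rule Suc.IH)
      show "valid (c(Suc m := 0))" "valid (d(Suc m := 0))"
        using Suc.prems(1,2) valid_drop by blast+
      show "\<forall>i>m. (c(Suc m := 0)) i = 0" "\<forall>i>m. (d(Suc m := 0)) i = 0"
        using Suc.prems(3,4) by auto
      show "val (c(Suc m := 0)) m = val (d(Suc m := 0)) m"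
        using val_upd[of c m 0] val_upd[of d m 0] \<open>val c m = val d m\<close> by simp
    qed
    show ?thesis
    proof
      fix i show "c i = d i" using fun_cong[OF \<open>c(Suc m := 0) = d(Suc m := 0)\<close>, of i] True
        by (cases "i = Suc m") auto
    qed
  next
    case False
    then have "c (Suc m) < d (Suc m) \<or> d (Suc m) < c (Suc m)" by linarith
    then show ?thesis using key[of c d] key[of d c] Suc.prems by auto
  qed
qed

lemma exist:
  "n < fib (2*m+2) \<Longrightarrow> \<exists>c. valid c \<and> (\<forall>i>m. c i = 0) \<and> val c m = n \<and> (n < fib (2*m+1) \<longrightarrow> free m c)"
proof (induction m arbitrary: n)
  case 0
  then show ?case by (intro exI[of _ "\<lambda>_. 0"]) (simp add: valid_def val_def free_def)
next
  case (Suc m)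
  have F: "fib (2*m+4) = fib (2*m+3) + fib (2*m+2)" "fib (2*m+3) = fib (2*m+2) + fib (2*m+1)"
    using fibA fibB by auto
  have eqs: "2 * Suc m + 2 = 2*m+4" "2 * Suc m + 1 = 2*m+3" by auto
  have n: "n < fib (2*m+4)" using Suc.prems unfolding eqs .
  consider "n < fib (2*m+2)" | "fib (2*m+2) \<le> n" "n < 2 * fib (2*m+2)" | "2 * fib (2*m+2) \<le> n"
    by linarith
  then show ?case
  proof cases
    case 1
    then obtain c where c: "valid c" "\<forall>i>m. c i = 0" "val c m = n" using Suc.IH by blast
    have "free (Suc m) c" unfolding free_def
    proof (intro allI impI)
      fix i assume "i \<le> Suc m" "c i = 2"
      have "c (Suc m) = 0" using c(2) by simp
      then have "i \<noteq> Suc m" using \<open>c i = 2\<close> by auto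
      then show "\<exists>k>i. k \<le> Suc m \<and> c k = 0" using \<open>i \<le> Suc m\<close> \<open>c (Suc m) = 0\<close>
        by (intro exI[of _ "Suc m"]) auto
    qed
    then show ?thesis using c by (intro exI[of _ c]) (auto simp add: val_Suc)
  next
    case 2
    have lt: "n - fib (2*m+2) < fib (2*m+2)" using 2 by linarith
    from Suc.IH[OF lt] obtain c where c: "valid c" "\<forall>i>m. c i = 0" "val c m = n - fib (2*m+2)"
      "n - fib (2*m+2) < fib (2*m+1) \<longrightarrow> free m c" by blast
    define c1 where "c1 = c(Suc m := 1)"
    have "valid c1" unfolding valid_def c1_def
    proof (intro conjI allI impI)
      show "(c(Suc m := 1)) 0 = 0" using c(1) by (simp add: valid_def)
      fix i show "(c(Suc m := 1)) i \<le> 2" using c(1) by (simp add: valid_def)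
    next
      fix i j assume a: "i < j \<and> (c(Suc m := 1)) i = 2 \<and> (c(Suc m := 1)) j = 2"
      then have "i \<noteq> Suc m" "j \<noteq> Suc m" "c i = 2" "c j = 2" by (auto split: if_splits)
      have "j \<le> m" proof (rule ccontr)
        assume "\<not> j \<le> m" then have "c j = 0" using c(2) by simp
        then show False using \<open>c j = 2\<close> by simp
      qed
      obtain k where "i < k" "k < j" "c k = 0" using c(1) a \<open>c i = 2\<close> \<open>c j = 2\<close>
        unfolding valid_def by blast
      then show "\<exists>k>i. k < j \<and> (c(Suc m := 1)) k = 0" using \<open>j \<le> m\<close> by (intro exI[of _ k]) auto
    qed
    moreover have "\<forall>i>Suc m. c1 i = 0" using c(2) by (simp add: c1_def)
    moreover have "val c1 (Suc m) = n" using c(3) 2 by (simp add: c1_def val_Suc val_upd)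
    moreover have "free (Suc m) c1" if "n < fib (2 * Suc m + 1)"
    proof -
      have "n < fib (2*m+3)" using that unfolding eqs .
      then have "n - fib (2*m+2) < fib (2*m+1)" using F(2) 2 by linarith
      then have "free m c" using c(4) by blast
      show ?thesis unfolding free_def
      proof (intro allI impI)
        fix i assume i: "i \<le> Suc m" "c1 i = 2"
        then have "i \<noteq> Suc m" by (auto simp: c1_def)
        then have "i \<le> m" "c i = 2" using i by (auto simp: c1_def)
        then obtain k where "i < k" "k \<le> m" "c k = 0" using \<open>free m c\<close> unfolding free_def by blast
        then show "\<exists>k>i. k \<le> Suc m \<and> c1 k = 0" by (intro exI[of _ k]) (auto simp: c1_def)
      qed
    qed
    ultimately show ?thesis by blast
  next
    case 3
    have lt: "n - 2 * fib (2*m+2) < fib (2*m+1)" using 3 n F by linarith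
    have lt2: "n - 2 * fib (2*m+2) < fib (2*m+2)" using lt fib_mono[of "2*m+1" "2*m+2"] by linarith
    from Suc.IH[OF lt2] lt obtain c where c: "valid c" "\<forall>i>m. c i = 0" "val c m = n - 2 * fib (2*m+2)"
      "free m c" by blast
    define c1 where "c1 = c(Suc m := 2)"
    have "valid c1" unfolding valid_def c1_def
    proof (intro conjI allI impI)
      show "(c(Suc m := 2)) 0 = 0" using c(1) by (simp add: valid_def)
      fix i show "(c(Suc m := 2)) i \<le> 2" using c(1) by (simp add: valid_def)
    next
      fix i j assume a: "i < j \<and> (c(Suc m := 2)) i = 2 \<and> (c(Suc m := 2)) j = 2"
      show "\<exists>k>i. k < j \<and> (c(Suc m := 2)) k = 0"
      proof (cases "j = Suc m")
        case True
        then have "i \<le> m" "c i = 2" using a by auto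
        then obtain k where "i < k" "k \<le> m" "c k = 0" using c(4) unfolding free_def by blast
        then show ?thesis using True by (intro exI[of _ k]) auto
      next
        case False
        then have "c j = 2" using a by auto
        have "j \<le> m" proof (rule ccontr)
        assume "\<not> j \<le> m" then have "c j = 0" using c(2) by simp
        then show False using \<open>c j = 2\<close> by simp
      qed
        then have "i \<noteq> Suc m" "c i = 2" using a by auto
        obtain k where "i < k" "k < j" "c k = 0" using c(1) a \<open>c i = 2\<close> \<open>c j = 2\<close>
          unfolding valid_def by blast
        then show ?thesis using \<open>j \<le> m\<close> by (intro exI[of _ k]) auto
      qed
    qed
    moreover have "\<forall>i>Suc m. c1 i = 0" using c(2) by (simp add: c1_def)
    moreover have "val c1 (Suc m) = n" using c(3) 3 by (simp add: c1_def val_Suc val_upd)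
    moreover have "\<not> n < fib (2 * Suc m + 1)" using 3 F eqs by simp
    ultimately show ?thesis by blast
  qed
qed


lemma is_CG_iff:
  assumes "\<forall>i>m. c i = 0"
  shows "is_CG n c \<longleftrightarrow> valid c \<and> n = val c m"
proof -
  have sub: "{i. c i \<noteq> 0} \<subseteq> {..m}"
  proof
    fix x assume "x \<in> {i. c i \<noteq> 0}"
    then show "x \<in> {..m}" using assms by (cases "x \<le> m") auto
  qed
  have fin: "finite {i. c i \<noteq> 0}" using sub finite_subset by blast
  have S: "(\<Sum>i\<in>{i. c i \<noteq> 0}. c i * fib (2*i)) = val c m"
    unfolding val_def by (rule sum.mono_neutral_left) (use sub in auto)
  show ?thesis unfolding is_CG_def valid_def using fin S by auto
qed

lemma is_CG_bound: "is_CG n c \<Longrightarrow> \<exists>m. \<forall>i>m. c i = 0"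
proof -
  assume "is_CG n c"
  then have "finite {i. c i \<noteq> 0}" by (simp add: is_CG_def)
  then have "\<forall>i>Max {i. c i \<noteq> 0}. c i = 0"
  proof (intro allI impI)
    fix i assume fin: "finite {i. c i \<noteq> 0}" and i: "i > Max {i. c i \<noteq> 0}"
    show "c i = 0"
    proof (rule ccontr)
      assume "c i \<noteq> 0"
      then have "i \<le> Max {i. c i \<noteq> 0}" using Max_ge[OF fin] by simp
      then show False using i by simp
    qed
  qed
  then show ?thesis by blast
qed

lemma fib_ge: "m < fib (2*m+2)"
proof (induction m)
  case 0 then show ?case by simp
next
  case (Suc m)
  have "fib (2*m+4) = fib (2*m+3) + fib (2*m+2)" by (rule fibA)
  moreover have "fib (2*m+3) > 0" by (intro fib_neq_0_nat) simp
  moreover have "2 * Suc m + 2 = 2*m+4" by simp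
  ultimately show ?case using Suc.IH by simp
qed

lemma CG_unique: "\<exists>!c. is_CG n c"
proof -
  obtain c where c: "valid c" "\<forall>i>n. c i = 0" "val c n = n" using exist[OF fib_ge[of n]] by blast
  have ex: "is_CG n c" using is_CG_iff[OF c(2)] c by simp
  have un: "d = e" if hd: "is_CG n d" and he: "is_CG n e" for d e
  proof -
    obtain m1 where m1: "\<forall>i>m1. d i = 0" using is_CG_bound[OF hd] by blast
    obtain m2 where m2: "\<forall>i>m2. e i = 0" using is_CG_bound[OF he] by blast
    have a: "\<forall>i>max m1 m2. d i = 0" "\<forall>i>max m1 m2. e i = 0" using m1 m2 by auto
    show ?thesis using is_CG_iff[OF a(1)] is_CG_iff[OF a(2)] hd he uniq[OF _ _ a(1) a(2)] by auto
  qed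
  show ?thesis using ex un by blast
qed

lemma CG_coeff_is: "is_CG n (CG_coeff n)"
  unfolding CG_coeff_def by (rule theI'[OF CG_unique])

lemma CG_coeff_eq: "is_CG n c \<Longrightarrow> CG_coeff n = c"
  using CG_unique CG_coeff_is by blast

lemma CG_img: "CG n = (\<lambda>i. fib (2*i)) ` {i. i \<ge> 1 \<and> CG_coeff n i \<noteq> 0}"
  unfolding CG_def by auto

lemma CG1_img: "CG1 n = (\<lambda>i. fib (2*i)) ` {i. i \<ge> 1 \<and> CG_coeff n i = 1}"
  unfolding CG1_def by auto

lemma CG2_img: "CG2 n = (\<lambda>i. fib (2*i)) ` {i. i \<ge> 1 \<and> CG_coeff n i = 2}"
  unfolding CG2_def by auto

lemma supp_fin: "finite {i. CG_coeff n i \<noteq> 0}"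
  using CG_coeff_is[of n] by (simp add: is_CG_def)

lemma CG_fin: "finite (CG n)"
  unfolding CG_img by (rule finite_imageI) (rule finite_subset[OF _ supp_fin], auto)

lemma CG1_fin: "finite (CG1 n)"
  unfolding CG1_img by (rule finite_imageI) (rule finite_subset[OF _ supp_fin[of n]], auto)

lemma CG2_fin: "finite (CG2 n)"
  unfolding CG2_img by (rule finite_imageI) (rule finite_subset[OF _ supp_fin[of n]], auto)

lemma top0:
  assumes "Max (CG n) = fib (2*K)"
  shows "\<forall>i>K. CG_coeff n i = 0"
proof (intro allI impI)
  fix i assume "K < i"
  show "CG_coeff n i = 0"
  proof (rule ccontr)
    assume "CG_coeff n i \<noteq> 0"
    then have "fib (2*i) \<in> CG n" using \<open>K < i\<close> unfolding CG_img by auto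
    then have "fib (2*i) \<le> fib (2*K)" using Max_ge[OF CG_fin] assms by metis
    then show False using fib2_less[OF \<open>K < i\<close>] by simp
  qed
qed

lemma topK1:
  assumes "CG1 n \<noteq> {}" "Max (CG1 n) = fib (2*K)"
  shows "CG_coeff n K = 1"
proof -
  have "fib (2*K) \<in> CG1 n" using Max_in[OF CG1_fin assms(1)] assms(2) by simp
  then obtain i where "CG_coeff n i = 1" "fib (2*K) = fib (2*i)" unfolding CG1_img by auto
  then show ?thesis using fib2_inj by metis
qed

lemma topK2:
  assumes "CG2 n \<noteq> {}" "Max (CG2 n) = fib (2*K)"
  shows "CG_coeff n K = 2"
proof -
  have "fib (2*K) \<in> CG2 n" using Max_in[OF CG2_fin assms(1)] assms(2) by simp
  then obtain i where "CG_coeff n i = 2" "fib (2*i) = fib (2*K)" unfolding CG2_img by auto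
  then show ?thesis using fib2_inj by metis
qed

lemma val_ge: "c m * fib (2*m) \<le> val c m"
  unfolding val_def by (rule member_le_sum) auto

theorem lemma3p5:
  fixes k l :: nat
  assumes "k \<ge> 1"
  shows "Min {n \<in> A k. CG2 n \<noteq> {} \<and> Max (CG n) = fib (2*k + 2*l) \<and> Max (CG2 n) = fib (2*k + 2*l)}
       > Max {n \<in> A k. CG1 n \<noteq> {} \<and> Max (CG n) = fib (2*k + 2*l) \<and> Max (CG1 n) = fib (2*k + 2*l)}"
proof -
  define K where "K = k + l"
  have KK: "2*k + 2*l = 2*K" by (simp add: K_def)
  have kK: "k \<le> K" "1 \<le> K" using assms by (auto simp: K_def)
  obtain m where m: "K = Suc m" using kK(2) by (cases K) auto
  have fK: "fib (2*K) = fib (2*m+2)" using m by simp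
  define S1 where "S1 = {n \<in> A k. CG1 n \<noteq> {} \<and> Max (CG n) = fib (2*K) \<and> Max (CG1 n) = fib (2*K)}"
  define S2 where "S2 = {n \<in> A k. CG2 n \<noteq> {} \<and> Max (CG n) = fib (2*K) \<and> Max (CG2 n) = fib (2*K)}"
  have up1: "a < 2 * fib (2*K)" if "a \<in> S1" for a
  proof -
    let ?c = "CG_coeff a"
    have t: "\<forall>i>K. ?c i = 0" "?c K = 1" using that top0 topK1 unfolding S1_def by auto
    have "valid ?c" "a = val ?c K" using is_CG_iff[OF t(1)] CG_coeff_is[of a] by auto
    moreover have "val ?c m < fib (2*m+2)" using drop_bound[of ?c m] t(1) \<open>valid ?c\<close> m by simp
    ultimately show ?thesis using t(2) m fK by (simp add: val_Suc)
  qed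
  have lo2: "2 * fib (2*K) \<le> b" "b < fib (2*K+2)" if "b \<in> S2" for b
  proof -
    let ?c = "CG_coeff b"
    have t: "\<forall>i>K. ?c i = 0" "?c K = 2" using that top0 topK2 unfolding S2_def by auto
    have "valid ?c" "b = val ?c K" using is_CG_iff[OF t(1)] CG_coeff_is[of b] by auto
    then show "2 * fib (2*K) \<le> b" "b < fib (2*K+2)" using val_ge[of ?c K] t(2) bound[of ?c K] t(1) by auto
  qed
  have MinMax: "Min {fib (2*k), fib (2*K)} = fib (2*k)" "Max {fib (2*k), fib (2*K)} = fib (2*K)"
    using fib_mono[of "2*k" "2*K"] kK(1) by auto
  define c1 where "c1 = (\<lambda>i. if i = K then 1 else if i = k then 1 else (0::nat))"
  define n1 where "n1 = val c1 K"
  have c1s: "\<forall>i>K. c1 i = 0" using kK(1) by (auto simp: c1_def)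
  have "valid c1" using kK assms unfolding valid_def c1_def by auto
  then have "CG_coeff n1 = c1" using CG_coeff_eq is_CG_iff[OF c1s] n1_def by blast
  then have e1: "CG n1 = {fib (2*k), fib (2*K)}" "CG1 n1 = {fib (2*k), fib (2*K)}"
    unfolding CG_img CG1_img using kK assms by (auto simp: c1_def)
  have "n1 \<ge> 1" using val_ge[of c1 K] fib_neq_0_nat[of "2*K"] kK(2) unfolding n1_def c1_def by simp
  then have "n1 \<in> S1" unfolding S1_def A_def using e1 MinMax by simp
  define c2 where "c2 = (\<lambda>i. if i = K then 2 else if i = k then 1 else (0::nat))"
  define n2 where "n2 = val c2 K"
  have c2s: "\<forall>i>K. c2 i = 0" using kK(1) by (auto simp: c2_def)
  have "valid c2" using kK assms unfolding valid_def c2_def by auto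
  then have "CG_coeff n2 = c2" using CG_coeff_eq is_CG_iff[OF c2s] n2_def by blast
  then have e2: "CG n2 = {fib (2*k), fib (2*K)}" "CG2 n2 = {fib (2*K)}"
    unfolding CG_img CG2_img using kK assms by (auto simp: c2_def)
  have "n2 \<ge> 1" using val_ge[of c2 K] fib_neq_0_nat[of "2*K"] kK(2) unfolding n2_def c2_def by simp
  then have "n2 \<in> S2" unfolding S2_def A_def using e2 MinMax by simp
  have f1: "finite S1" using up1 by (intro finite_subset[of S1 "{..<2 * fib (2*K)}"]) auto
  have f2: "finite S2" using lo2(2) by (intro finite_subset[of S2 "{..<fib (2*K+2)}"]) auto
  have "Max S1 \<in> S1" using Max_in[OF f1] \<open>n1 \<in> S1\<close> by blast
  moreover have "Min S2 \<in> S2" using Min_in[OF f2] \<open>n2 \<in> S2\<close> by blast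
  ultimately have "Max S1 < Min S2" using up1 lo2(1) by fastforce
  then show ?thesis unfolding KK S1_def S2_def .
qed

end
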